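(* Let $G$ be a connected graph and $v\in V(G)$. Let $G_v$ be the graph obtained from $G$ by adding a new vertex $v'$ adjacent to $v$ and to all vertices of $N_G(v)$. For a search tree $T$ on $G$, let $P(T)=\{T(i,j)\mid i\in\{0,\ldots,d_{T,v}\},\ j\in\{1,2\}\}$. Then $\{P(T)\mid T\in V(\mathcal{R}(G))\}$ is a partition of $V(\mathcal{R}(G_v))$.
   Context: For a connected graph $G$, a search tree on $G$ is a rooted tree with vertex set $V(G)$ defined recursively: its root is some vertex $r\in V(G)$, and the children of $r$ are the roots of search trees on the connected components of $G-r$. $V(\mathcal{R}(G))$ denotes the set of search trees on $G$. For a rooted tree $T$ with root $r_T$ and $w\in V(T)$, $d_{T,w}$ is the distance from $r_T$ to $w$. Insertion: for a rooted tree $T$, $v\in V(T)$ with $d=d_{T,v}$ and root-to-$v$ path $a_0,\ldots,a_d=v$, and $x\notin V(T)$: $T(0,x,v)$ has $x$ as new root with $T$ as its only subtree; for $1\le i\le d$, $T(i,x,v)$ is obtained by subdividing the edge $a_{i-1}a_i$ by $x$. Define $T(i,1)=T(i,v',v)$, and $T(i,2)=\rho^\ast(T(i,1))$, where $\rho$ is the permutation of $V(G_v)$ swapping $v$ and $v'$ and fixing all other vertices, and $\rho^\ast(R)$ is the rooted tree with edge set $\{\rho(a)\rho(b)\mid ab\in E(R)\}$ and root $\rho(r_R)$. *)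

theory Defs
  imports Main "HOL-Library.Disjoint_Sets" "HOL-Combinatorics.Transposition"
begin

definition graph :: "'a set \<Rightarrow> 'a set set \<Rightarrow> bool" where
  "graph V E \<longleftrightarrow> finite V \<and> (\<forall>e\<in>E. \<exists>a b. a \<in> V \<and> b \<in> V \<and> a \<noteq> b \<and> e = {a, b})"

definition reach :: "'a set \<Rightarrow> 'a set set \<Rightarrow> 'a \<Rightarrow> 'a \<Rightarrow> bool" where
  "reach V E x y \<longleftrightarrow> x \<in> V \<and> (\<lambda>a b. a \<in> V \<and> b \<in> V \<and> {a, b} \<in> E)\<^sup>*\<^sup>* x y"

definition connected_graph :: "'a set \<Rightarrow> 'a set set \<Rightarrow> bool" where
  "connected_graph V E \<longleftrightarrow> V \<noteq> {} \<and> (\<forall>x\<in>V. \<forall>y\<in>V. reach V E x y)"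

definition induced :: "'a set set \<Rightarrow> 'a set \<Rightarrow> 'a set set" where
  "induced E C = {e \<in> E. e \<subseteq> C}"

definition comps :: "'a set \<Rightarrow> 'a set set \<Rightarrow> 'a set set" where
  "comps V E = {{y \<in> V. reach V E x y} | x. x \<in> V}"

text \<open>Rooted trees are pairs (root, set of undirected edges).\<close>
type_synonym 'a rtree = "'a \<times> 'a set set"

inductive search_tree :: "'a set \<Rightarrow> 'a set set \<Rightarrow> 'a rtree \<Rightarrow> bool" where
  st: "connected_graph V E \<Longrightarrow> r \<in> V \<Longrightarrow>
   (\<forall>C\<in>comps (V - {r}) (induced E (V - {r})). search_tree C (induced E C) (t C)) \<Longrightarrow>
   F = (\<Union>C\<in>comps (V - {r}) (induced E (V - {r})). insert {r, fst (t C)} (snd (t C))) \<Longrightarrow>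
   search_tree V E (r, F)"

definition tree_path :: "'a set set \<Rightarrow> 'a list \<Rightarrow> bool" where
  "tree_path F p \<longleftrightarrow> p \<noteq> [] \<and> distinct p \<and> (\<forall>i. Suc i < length p \<longrightarrow> {p ! i, p ! Suc i} \<in> F)"

definition root_path :: "'a rtree \<Rightarrow> 'a \<Rightarrow> 'a list" where
  "root_path T w = (THE p. tree_path (snd T) p \<and> hd p = fst T \<and> last p = w)"

definition depth :: "'a rtree \<Rightarrow> 'a \<Rightarrow> nat" where
  "depth T w = length (root_path T w) - 1"

definition ins :: "'a rtree \<Rightarrow> nat \<Rightarrow> 'a \<Rightarrow> 'a \<Rightarrow> 'a rtree" where
  "ins T i x v =
    (if i = 0 then (x, insert {x, fst T} (snd T))
     else (let p = root_path T v in
       (fst T, (snd T - {{p ! (i - 1), p ! i}}) \<union> {{p ! (i - 1), x}, {x, p ! i}})))"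

definition relabel :: "('a \<Rightarrow> 'a) \<Rightarrow> 'a rtree \<Rightarrow> 'a rtree" where
  "relabel \<rho> R = (\<rho> (fst R), (\<lambda>e. \<rho> ` e) ` snd R)"

definition Gv_edges :: "'a set \<Rightarrow> 'a set set \<Rightarrow> 'a \<Rightarrow> 'a \<Rightarrow> 'a set set" where
  "Gv_edges V E v v' = E \<union> {{v', v}} \<union> {{v', u} | u. u \<in> V \<and> {v, u} \<in> E}"

definition Pset :: "'a rtree \<Rightarrow> 'a \<Rightarrow> 'a \<Rightarrow> 'a rtree set" where
  "Pset T v v' = {ins T i v' v | i. i \<le> depth T v}
              \<union> {relabel (transpose v v') (ins T i v' v) | i. i \<le> depth T v}"

end

theory Submission
  imports Defs
begin

abbreviation adj :: "'a set \<Rightarrow> 'a set set \<Rightarrow> 'a \<Rightarrow> 'a \<Rightarrow> bool" where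
  "adj V E \<equiv> (\<lambda>a b. a \<in> V \<and> b \<in> V \<and> {a, b} \<in> E)"

lemma reach_in: "reach V E x y \<Longrightarrow> x \<in> V \<and> y \<in> V"
proof -
  assume "reach V E x y"
  hence "x \<in> V" "(adj V E)\<^sup>*\<^sup>* x y" by (auto simp: reach_def)
  from this(2) have "y \<in> V" using \<open>x \<in> V\<close> by (induction rule: rtranclp_induct) auto
  thus ?thesis using \<open>x \<in> V\<close> by simp
qed

lemma reach_refl: "x \<in> V \<Longrightarrow> reach V E x x"
  by (simp add: reach_def)

lemma reach_trans: "reach V E x y \<Longrightarrow> reach V E y z \<Longrightarrow> reach V E x z"
  by (auto simp: reach_def)

lemma reach_sym: "reach V E x y \<Longrightarrow> reach V E y x"
proof -
  assume a: "reach V E x y"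
  have s: "symp (adj V E)" by (auto simp: symp_def insert_commute)
  have "(adj V E)\<^sup>*\<^sup>* y x" using a sympD[OF symp_rtranclp[OF s]] by (auto simp: reach_def)
  thus ?thesis using reach_in[OF a] by (simp add: reach_def)
qed

lemma reach_edge: "a \<in> V \<Longrightarrow> b \<in> V \<Longrightarrow> {a,b} \<in> E \<Longrightarrow> reach V E a b"
  by (auto simp: reach_def)

lemma rtranclp_map:
  assumes "R\<^sup>*\<^sup>* x y" and "\<And>a b. R a b \<Longrightarrow> R' (f a) (f b) \<or> f a = f b"
  shows "R'\<^sup>*\<^sup>* (f x) (f y)"
  using assms(1)
proof (induction rule: rtranclp_induct)
  case base then show ?case by simp
next
  case (step y z)
  then show ?case using assms(2)[OF step(2)]
    by (metis rtranclp.rtrancl_into_rtrancl)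
qed

lemma reach_map:
  assumes "reach V E x y"
    and "\<And>a b. a \<in> V \<Longrightarrow> b \<in> V \<Longrightarrow> {a,b} \<in> E \<Longrightarrow> (f a \<in> V' \<and> f b \<in> V' \<and> {f a, f b} \<in> E') \<or> f a = f b"
    and "f x \<in> V'"
  shows "reach V' E' (f x) (f y)"
proof -
  have "(adj V E)\<^sup>*\<^sup>* x y" using assms(1) by (simp add: reach_def)
  hence "(adj V' E')\<^sup>*\<^sup>* (f x) (f y)"
    by (rule rtranclp_map) (use assms(2) in blast)
  thus ?thesis using assms(3) by (simp add: reach_def)
qed

lemma reach_mono: "reach V E x y \<Longrightarrow> V \<subseteq> V' \<Longrightarrow> E \<subseteq> E' \<Longrightarrow> reach V' E' x y"
  using reach_map[of V E x y "id" V' E'] reach_in[of V E x y] by auto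

definition cmp :: "'a set \<Rightarrow> 'a set set \<Rightarrow> 'a \<Rightarrow> 'a set" where
  "cmp V E x = {y \<in> V. reach V E x y}"

lemma comps_comp: "comps V E = cmp V E ` V"
  by (auto simp: comps_def cmp_def)

lemma comp_eq: "reach V E x y \<Longrightarrow> cmp V E x = cmp V E y"
proof -
  assume r: "reach V E x y"
  have "reach V E x z \<longleftrightarrow> reach V E y z" for z
    using reach_trans[OF r, of z] reach_trans[OF reach_sym[OF r], of z] by blast
  thus ?thesis unfolding cmp_def by simp
qed

lemma in_comp: "x \<in> V \<Longrightarrow> x \<in> cmp V E x"
  by (simp add: cmp_def reach_refl)

lemma comp_sub: "cmp V E x \<subseteq> V"
  by (auto simp: cmp_def)

lemma comps_sub: "C \<in> comps V E \<Longrightarrow> C \<subseteq> V"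
  by (auto simp: comps_comp cmp_def)

lemma comps_ne: "C \<in> comps V E \<Longrightarrow> C \<noteq> {}"
  unfolding comps_comp using in_comp by fastforce

lemma comps_disj: "C \<in> comps V E \<Longrightarrow> D \<in> comps V E \<Longrightarrow> x \<in> C \<Longrightarrow> x \<in> D \<Longrightarrow> C = D"
proof -
  assume "C \<in> comps V E" "D \<in> comps V E" "x \<in> C" "x \<in> D"
  then obtain a b where ab: "C = cmp V E a" "D = cmp V E b" "reach V E a x" "reach V E b x"
    by (auto simp: comps_comp cmp_def)
  have "cmp V E a = cmp V E x" by (rule comp_eq) fact
  moreover have "cmp V E b = cmp V E x" by (rule comp_eq) fact
  ultimately show "C = D" using ab by simp
qed

lemma comps_cover: "x \<in> V \<Longrightarrow> \<exists>C\<in>comps V E. x \<in> C"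
proof -
  assume "x \<in> V"
  hence "cmp V E x \<in> comps V E" "x \<in> cmp V E x" by (simp_all add: comps_comp in_comp)
  thus ?thesis by blast
qed

lemma comps_eq_comp: "C \<in> comps V E \<Longrightarrow> x \<in> C \<Longrightarrow> C = cmp V E x"
proof -
  assume a: "C \<in> comps V E" "x \<in> C"
  hence "x \<in> V" using comps_sub by blast
  hence "cmp V E x \<in> comps V E" "x \<in> cmp V E x" by (simp_all add: comps_comp in_comp)
  thus ?thesis using comps_disj[OF a(1) _ a(2)] by blast
qed

lemma comps_connected: "connected_graph V E \<Longrightarrow> comps V E = {V}"
proof -
  assume c: "connected_graph V E"
  have "\<And>x. x \<in> V \<Longrightarrow> cmp V E x = V"
  proof
    fix x assume "x \<in> V"
    show "cmp V E x \<subseteq> V" by (rule comp_sub)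
    show "V \<subseteq> cmp V E x" using c \<open>x \<in> V\<close> unfolding connected_graph_def cmp_def by blast
  qed
  moreover have "V \<noteq> {}" using c unfolding connected_graph_def by blast
  ultimately show ?thesis unfolding comps_comp by (simp add: image_constant_conv)
qed


definition decomp where
  "decomp V E r F t \<longleftrightarrow> connected_graph V E \<and> r \<in> V \<and>
    (\<forall>C\<in>comps (V - {r}) (induced E (V - {r})). search_tree C (induced E C) (t C)) \<and>
    F = (\<Union>C\<in>comps (V - {r}) (induced E (V - {r})). insert {r, fst (t C)} (snd (t C)))"

lemma st_iff: "search_tree V E (r,F) \<longleftrightarrow> (\<exists>t. decomp V E r F t)"
proof
  assume "search_tree V E (r,F)"
  then show "\<exists>t. decomp V E r F t" by (cases rule: search_tree.cases) (auto simp: decomp_def)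
next
  assume "\<exists>t. decomp V E r F t" then show "search_tree V E (r,F)"
    unfolding decomp_def by (blast intro: search_tree.st)
qed

definition good :: "'a set \<Rightarrow> 'a rtree \<Rightarrow> bool" where
  "good V T \<longleftrightarrow> fst T \<in> V \<and> (\<forall>e\<in>snd T. \<exists>a b. e = {a,b} \<and> a \<noteq> b \<and> a \<in> V \<and> b \<in> V)"

lemma st_good: "search_tree V E T \<Longrightarrow> good V T"
proof (induction rule: search_tree.induct)
  case (st V E r t F)
  note hF = \<open>F = _\<close>
  note IH = \<open>\<forall>C\<in>_. search_tree C (induced E C) (t C) \<and> good C (t C)\<close>
  let ?W = "V - {r}"
  let ?K = "comps ?W (induced E ?W)"
  show ?case unfolding good_def
  proof (intro conjI ballI)
    show "fst (r, F) \<in> V" using st by simp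
    fix e assume "e \<in> snd (r, F)"
    then obtain C where C: "C \<in> ?K" "e \<in> insert {r, fst (t C)} (snd (t C))" using hF by auto
    have CW: "C \<subseteq> ?W" using comps_sub[OF C(1)] .
    have g: "good C (t C)" using IH C(1) by blast
    show "\<exists>a b. e = {a, b} \<and> a \<noteq> b \<and> a \<in> V \<and> b \<in> V"
    proof (cases "e = {r, fst (t C)}")
      case True
      have "fst (t C) \<in> C" using g by (simp add: good_def)
      thus ?thesis using True CW \<open>r \<in> V\<close> by blast
    next
      case False
      hence "e \<in> snd (t C)" using C(2) by blast
      then obtain a b where "e = {a,b}" "a \<noteq> b" "a \<in> C" "b \<in> C" using g unfolding good_def by blast
      thus ?thesis using CW by blast
    qed
  qed
qed

lemma good_edge_sub: "good V T \<Longrightarrow> e \<in> snd T \<Longrightarrow> e \<subseteq> V"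
  unfolding good_def by fastforce

lemma good_edge_ne: "good V T \<Longrightarrow> e \<in> snd T \<Longrightarrow> e \<noteq> {}"
  unfolding good_def by fastforce

lemma decomp_good:
  assumes "decomp V E r F t" "C \<in> comps (V - {r}) (induced E (V - {r}))"
  shows "good C (t C)" "fst (t C) \<in> C" "C \<subseteq> V - {r}" "\<And>e. e \<in> snd (t C) \<Longrightarrow> e \<subseteq> C"
    "search_tree C (induced E C) (t C)"
proof -
  show st: "search_tree C (induced E C) (t C)" using assms unfolding decomp_def by blast
  show g: "good C (t C)" using st_good[OF st] .
  show "fst (t C) \<in> C" using g by (simp add: good_def)
  show "C \<subseteq> V - {r}" using comps_sub[OF assms(2)] .
  show "\<And>e. e \<in> snd (t C) \<Longrightarrow> e \<subseteq> C" using good_edge_sub[OF g] .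
qed

lemma decomp_edge_r:
  assumes "decomp V E r F t" "e \<in> F" "r \<in> e"
  shows "\<exists>C\<in>comps (V - {r}) (induced E (V - {r})). e = {r, fst (t C)}"
proof -
  obtain C where C: "C \<in> comps (V - {r}) (induced E (V - {r}))" "e \<in> insert {r, fst (t C)} (snd (t C))"
    using assms(1,2) unfolding decomp_def by blast
  have "e \<notin> snd (t C)" using decomp_good(3,4)[OF assms(1) C(1)] assms(3) by blast
  thus ?thesis using C by blast
qed

lemma decomp_edge_nr:
  assumes "decomp V E r F t" "e \<in> F" "r \<notin> e"
  shows "\<exists>C\<in>comps (V - {r}) (induced E (V - {r})). e \<in> snd (t C)"
proof -
  obtain C where C: "C \<in> comps (V - {r}) (induced E (V - {r}))" "e \<in> insert {r, fst (t C)} (snd (t C))"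
    using assms(1,2) unfolding decomp_def by blast
  thus ?thesis using assms(3) by blast
qed

lemma decomp_sub:
  assumes "decomp V E r F t" "C \<in> comps (V - {r}) (induced E (V - {r}))"
  shows "insert {r, fst (t C)} (snd (t C)) \<subseteq> F"
  using assms unfolding decomp_def by blast


definition PS :: "'a rtree \<Rightarrow> 'a \<Rightarrow> 'a list set" where
  "PS T w = {p. tree_path (snd T) p \<and> hd p = fst T \<and> last p = w}"

lemma root_path_PS: "root_path T w = (THE p. p \<in> PS T w)"
  by (simp add: root_path_def PS_def)

lemma distinct_hd_last: "distinct p \<Longrightarrow> p \<noteq> [] \<Longrightarrow> hd p = last p \<Longrightarrow> p = [hd p]"
proof (cases p)
  case (Cons a q)
  assume d: "distinct p" "hd p = last p"
  show ?thesis
  proof (cases q)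
    case Nil thus ?thesis using Cons by simp
  next
    case (Cons b q')
    hence "last p \<in> set q" using \<open>p = a # q\<close> by simp
    moreover have "hd p = a" "a \<notin> set q" using d \<open>p = a # q\<close> by auto
    ultimately show ?thesis using d by simp
  qed
qed simp

lemma PS_root: "PS (r, F) r = {[r]}"
proof
  show "{[r]} \<subseteq> PS (r, F) r" by (simp add: PS_def tree_path_def)
  show "PS (r, F) r \<subseteq> {[r]}"
  proof
    fix p assume "p \<in> PS (r, F) r"
    hence "distinct p" "p \<noteq> []" "hd p = r" "last p = r" by (auto simp: PS_def tree_path_def)
    thus "p \<in> {[r]}" using distinct_hd_last by fastforce
  qed
qed

lemma path_in_set:
  assumes "tree_path F p" "\<And>e. e \<in> F \<Longrightarrow> e \<subseteq> C" "hd p \<in> C"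
  shows "set p \<subseteq> C"
proof
  fix x assume "x \<in> set p"
  then obtain j where j: "j < length p" "p ! j = x" by (auto simp: in_set_conv_nth)
  show "x \<in> C"
  proof (cases j)
    case 0 thus ?thesis using j assms(1,3) by (auto simp: tree_path_def hd_conv_nth)
  next
    case (Suc i)
    hence "{p ! i, p ! j} \<in> F" using assms(1) j by (auto simp: tree_path_def)
    thus ?thesis using assms(2) j by blast
  qed
qed

lemma PS_child:
  assumes dc: "decomp V E r F t" and C0: "C0 \<in> comps (V - {r}) (induced E (V - {r}))" and w: "w \<in> C0"
  shows "PS (r, F) w = (#) r ` PS (t C0) w"
proof
  let ?K = "comps (V - {r}) (induced E (V - {r}))"
  note g0 = decomp_good[OF dc C0]
  show "(#) r ` PS (t C0) w \<subseteq> PS (r, F) w"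
  proof
    fix p assume "p \<in> (#) r ` PS (t C0) w"
    then obtain p0 where p: "p = r # p0" and p0: "tree_path (snd (t C0)) p0" "hd p0 = fst (t C0)" "last p0 = w"
      by (auto simp: PS_def)
    have ne: "p0 \<noteq> []" using p0 by (simp add: tree_path_def)
    have "set p0 \<subseteq> C0" using path_in_set[OF p0(1) g0(4)] p0(2) g0(2) by simp
    hence rn: "r \<notin> set p0" using g0(3) by blast
    have "tree_path F p"
      unfolding tree_path_def
    proof (intro conjI allI impI)
      show "p \<noteq> []" using p by simp
      show "distinct p" using p rn p0(1) by (simp add: tree_path_def)
      fix i assume i: "Suc i < length p"
      show "{p ! i, p ! Suc i} \<in> F"
      proof (cases i)
        case 0
        hence "{p ! i, p ! Suc i} = {r, fst (t C0)}" using p p0(2) ne by (simp add: hd_conv_nth)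
        thus ?thesis using decomp_sub[OF dc C0] by simp
      next
        case (Suc k)
        hence "{p ! i, p ! Suc i} = {p0 ! k, p0 ! Suc k}" using p by simp
        moreover have "{p0 ! k, p0 ! Suc k} \<in> snd (t C0)" using p0(1) i p Suc by (simp add: tree_path_def)
        ultimately show ?thesis using decomp_sub[OF dc C0] by auto
      qed
    qed
    thus "p \<in> PS (r, F) w" using p p0 ne by (simp add: PS_def)
  qed
  show "PS (r, F) w \<subseteq> (#) r ` PS (t C0) w"
  proof
    fix p assume "p \<in> PS (r, F) w"
    hence tp: "tree_path F p" and hp: "hd p = r" and lp: "last p = w" by (auto simp: PS_def)
    have wr: "w \<noteq> r" using g0(3) w by blast
    obtain p0 where p: "p = r # p0" using tp hp by (cases p) (auto simp: tree_path_def)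
    have ne: "p0 \<noteq> []" using p lp wr by auto
    have rn: "r \<notin> set p0" using tp p by (simp add: tree_path_def)
    have dp0: "distinct p0" using tp p by (simp add: tree_path_def)
    have e0: "{r, p0 ! 0} \<in> F" using tp p ne by (auto simp: tree_path_def)
    obtain C1 where C1: "C1 \<in> ?K" "{r, p0 ! 0} = {r, fst (t C1)}"
      using decomp_edge_r[OF dc e0] by auto
    have r0: "r \<noteq> p0 ! 0" using rn ne by (auto simp: in_set_conv_nth)
    have h0: "p0 ! 0 = fst (t C1)" using C1(2) r0 by (auto simp: doubleton_eq_iff)
    note g1 = decomp_good[OF dc C1(1)]
    have stepC: "\<And>a b. {a, b} \<in> F \<Longrightarrow> a \<noteq> r \<Longrightarrow> b \<noteq> r \<Longrightarrow> a \<in> C1 \<Longrightarrow> b \<in> C1 \<and> {a,b} \<in> snd (t C1)"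
    proof -
      fix a b assume ab: "{a, b} \<in> F" "a \<noteq> r" "b \<noteq> r" "a \<in> C1"
      obtain C where C: "C \<in> ?K" "{a,b} \<in> snd (t C)" using decomp_edge_nr[OF dc ab(1)] ab(2,3) by auto
      have "{a,b} \<subseteq> C" using decomp_good(4)[OF dc C(1) C(2)] .
      hence "C = C1" using comps_disj[OF C(1) C1(1)] ab(4) by blast
      thus "b \<in> C1 \<and> {a,b} \<in> snd (t C1)" using C \<open>{a,b} \<subseteq> C\<close> by blast
    qed
    have allin: "\<forall>j < length p0. p0 ! j \<in> C1"
    proof (intro allI impI)
      fix j assume "j < length p0"
      thus "p0 ! j \<in> C1"
      proof (induction j)
        case 0 thus ?case using h0 g1(2) by simp
      next
        case (Suc j)
        have "Suc (Suc j) < length p" using Suc.prems p by simp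
        hence "{p ! Suc j, p ! Suc (Suc j)} \<in> F" using tp unfolding tree_path_def by blast
        hence ed: "{p0 ! j, p0 ! Suc j} \<in> F" using p by simp
        have "p0 ! j \<noteq> r" "p0 ! Suc j \<noteq> r" using rn Suc.prems by (auto simp: in_set_conv_nth)
        thus ?case using stepC[OF ed] Suc by simp
      qed
    qed
    have "last p0 = p0 ! (length p0 - 1)" using ne by (simp add: last_conv_nth)
    moreover have "length p0 - 1 < length p0" using ne by simp
    ultimately have "last p0 \<in> C1" using allin by metis
    moreover have "last p0 = w" using lp p ne by simp
    ultimately have "w \<in> C1" by simp
    hence CC: "C1 = C0" using comps_disj[OF C1(1) C0 _ w] by simp
    have "tree_path (snd (t C0)) p0"
      unfolding tree_path_def
    proof (intro conjI allI impI)
      show "p0 \<noteq> []" "distinct p0" using ne dp0 by auto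
      fix i assume i: "Suc i < length p0"
      have "Suc (Suc i) < length p" using i p by simp
      hence "{p ! Suc i, p ! Suc (Suc i)} \<in> F" using tp unfolding tree_path_def by blast
      hence ed: "{p0 ! i, p0 ! Suc i} \<in> F" using p by simp
      have "p0 ! i \<noteq> r" "p0 ! Suc i \<noteq> r" using rn i by (auto simp: in_set_conv_nth)
      moreover have "p0 ! i \<in> C1" using allin i by simp
      ultimately show "{p0 ! i, p0 ! Suc i} \<in> snd (t C0)" using stepC[OF ed] CC by simp
    qed
    moreover have "hd p0 = fst (t C0)" using h0 ne CC by (simp add: hd_conv_nth)
    moreover have "last p0 = w" using lp p ne by simp
    ultimately show "p \<in> (#) r ` PS (t C0) w" using p by (auto simp: PS_def)
  qed
qed

lemma PS_unique: "search_tree V E T \<Longrightarrow> w \<in> V \<Longrightarrow> \<exists>p. PS T w = {p}"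
proof (induction arbitrary: w rule: search_tree.induct)
  case (st V E r t F)
  have "\<forall>C\<in>comps (V - {r}) (induced E (V - {r})). search_tree C (induced E C) (t C)" using st.IH by blast
  hence dc: "decomp V E r F t" unfolding decomp_def by (intro conjI st.hyps)
  show ?case
  proof (cases "w = r")
    case True show ?thesis by (rule exI[of _ "[r]"]) (simp add: PS_root True)
  next
    case False
    then obtain C0 where C0: "C0 \<in> comps (V - {r}) (induced E (V - {r}))" "w \<in> C0"
      using comps_cover[of w "V - {r}"] st.prems by blast
    have "\<exists>p. PS (t C0) w = {p}" using st.IH C0 by blast
    then obtain p0 where "PS (t C0) w = {p0}" by blast
    hence "PS (r, F) w = {r # p0}" using PS_child[OF dc C0] by simp
    thus ?thesis by blast
  qed
qed

lemma root_path_in: "search_tree V E T \<Longrightarrow> w \<in> V \<Longrightarrow> root_path T w \<in> PS T w"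
  using PS_unique[of V E T w] by (auto simp: root_path_PS)

lemma root_path_root: "decomp V E r F t \<Longrightarrow> root_path (r, F) r = [r]"
  by (simp add: root_path_PS PS_root)

lemma root_path_child:
  assumes dc: "decomp V E r F t" and C0: "C0 \<in> comps (V - {r}) (induced E (V - {r}))" and w: "w \<in> C0"
  shows "root_path (r, F) w = r # root_path (t C0) w"
proof -
  obtain p0 where "PS (t C0) w = {p0}" using PS_unique[OF decomp_good(5)[OF dc C0] w] by blast
  thus ?thesis using PS_child[OF dc C0 w] by (simp add: root_path_PS)
qed


section \<open>Relabelling\<close>

abbreviation img :: "('a \<Rightarrow> 'b) \<Rightarrow> 'a set set \<Rightarrow> 'b set set" where
  "img f E \<equiv> (\<lambda>e. f ` e) ` E"

lemma relabel_relabel: "relabel f (relabel g X) = relabel (f \<circ> g) X"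
  by (simp add: relabel_def image_comp)

lemma relabel_id: "relabel id X = X"
  by (simp add: relabel_def)

lemma img_doubleton: "f ` {a, b} = {f a, f b}" by simp

lemma img_mem_doubleton: "{a,b} \<in> E \<Longrightarrow> {f a, f b} \<in> img f E"
proof -
  assume "{a,b} \<in> E"
  hence "f ` {a,b} \<in> img f E" by (rule imageI)
  thus ?thesis by simp
qed

lemma inj_img_mem: "inj f \<Longrightarrow> f ` e \<in> img f E \<longleftrightarrow> e \<in> E"
proof
  assume "inj f" "f ` e \<in> img f E"
  then obtain e' where "e' \<in> E" "f ` e = f ` e'" by blast
  thus "e \<in> E" using \<open>inj f\<close> by (simp add: inj_image_eq_iff)
qed blast

lemma reach_inj:
  assumes f: "inj f"
  shows "reach (f ` V) (img f E) (f x) (f y) \<longleftrightarrow> reach V E x y"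
proof
  assume r: "reach V E x y"
  show "reach (f ` V) (img f E) (f x) (f y)"
    by (rule reach_map[OF r]) (use reach_in[OF r] in \<open>auto intro: img_mem_doubleton\<close>)
next
  assume r: "reach (f ` V) (img f E) (f x) (f y)"
  have "reach V E (inv f (f x)) (inv f (f y))"
  proof (rule reach_map[OF r])
    fix a b assume ab: "a \<in> f ` V" "b \<in> f ` V" "{a, b} \<in> img f E"
    then obtain a0 b0 where "a = f a0" "b = f b0" "a0 \<in> V" "b0 \<in> V" by blast
    moreover have "{a0,b0} \<in> E" using ab(3) f inj_img_mem[OF f, of "{a0,b0}" E] \<open>a = f a0\<close> \<open>b = f b0\<close> by simp
    ultimately show "(inv f a \<in> V \<and> inv f b \<in> V \<and> {inv f a, inv f b} \<in> E) \<or> inv f a = inv f b"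
      using f by simp
  next
    show "inv f (f x) \<in> V" using reach_in[OF r] f by (auto simp: inj_image_mem_iff)
  qed
  thus "reach V E x y" using f by simp
qed

lemma cmp_inj: "inj f \<Longrightarrow> cmp (f ` V) (img f E) (f x) = f ` cmp V E x"
proof -
  assume f: "inj f"
  show ?thesis
  proof
    show "cmp (f ` V) (img f E) (f x) \<subseteq> f ` cmp V E x"
      unfolding cmp_def using reach_inj[OF f] by blast
    show "f ` cmp V E x \<subseteq> cmp (f ` V) (img f E) (f x)"
      unfolding cmp_def using reach_inj[OF f] by blast
  qed
qed

lemma comps_inj: "inj f \<Longrightarrow> comps (f ` V) (img f E) = (`) f ` comps V E"
  unfolding comps_comp by (simp add: image_image cmp_inj)

lemma induced_inj: "inj f \<Longrightarrow> induced (img f E) (f ` W) = img f (induced E W)"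
  unfolding induced_def by (auto simp: inj_image_subset_iff)

lemma conn_inj: "inj f \<Longrightarrow> connected_graph V E \<Longrightarrow> connected_graph (f ` V) (img f E)"
  unfolding connected_graph_def by (auto simp: reach_inj)

lemma st_relabel: "search_tree V E T \<Longrightarrow> inj f \<Longrightarrow> search_tree (f ` V) (img f E) (relabel f T)"
proof (induction rule: search_tree.induct)
  case (st V E r t F)
  note f = \<open>inj f\<close>
  let ?K = "comps (V - {r}) (induced E (V - {r}))"
  define t' where "t' D = relabel f (t (f -` D))" for D
  have W: "f ` V - {f r} = f ` (V - {r})" using f by (simp add: image_set_diff)
  have K: "comps (f ` V - {f r}) (induced (img f E) (f ` V - {f r})) = (`) f ` ?K"
    unfolding W induced_inj[OF f] comps_inj[OF f] ..
  have t': "t' (f ` C) = relabel f (t C)" for C using f by (simp add: t'_def inj_vimage_image_eq)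
  show ?case unfolding relabel_def fst_conv snd_conv
  proof (rule search_tree.st[where t = t'])
    show "connected_graph (f ` V) (img f E)" using conn_inj[OF f st.hyps(1)] .
    show "f r \<in> f ` V" using st.hyps(2) by simp
    show "\<forall>C\<in>comps (f ` V - {f r}) (induced (img f E) (f ` V - {f r})).
       search_tree C (induced (img f E) C) (t' C)"
      unfolding K
    proof
      fix D assume "D \<in> (`) f ` ?K"
      then obtain C where C: "C \<in> ?K" "D = f ` C" by blast
      have "search_tree (f ` C) (img f (induced E C)) (relabel f (t C))" using st.IH C(1) f by blast
      thus "search_tree D (induced (img f E) D) (t' D)" using C(2) t' induced_inj[OF f] by simp
    qed
    show "img f F = (\<Union>C\<in>comps (f ` V - {f r}) (induced (img f E) (f ` V - {f r})).
        insert {f r, fst (t' C)} (snd (t' C)))"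
      unfolding K st.hyps(3) by (simp add: image_UN t' relabel_def)
  qed
qed

lemma relabel_transpose_twice: "relabel (transpose a b) (relabel (transpose a b) X) = X"
  by (simp add: relabel_relabel relabel_id)

section \<open>G_v\<close>

lemma Gv_induced_C:
  assumes "v' \<notin> C"
  shows "induced (Gv_edges V E v v') C = induced E C"
  using assms unfolding induced_def Gv_edges_def by auto

lemma graph_edge: "graph V E \<Longrightarrow> e \<in> E \<Longrightarrow> e \<subseteq> V"
  unfolding graph_def by fastforce

lemma Gv_induced_ins:
  assumes g: "graph V E" and W: "W \<subseteq> V" "v \<in> W" and v': "v' \<notin> V"
  shows "induced (Gv_edges V E v v') (insert v' W) = Gv_edges W (induced E W) v v'"
proof -
  have "\<And>e. e \<in> E \<Longrightarrow> e \<subseteq> insert v' W \<longleftrightarrow> e \<subseteq> W" using graph_edge[OF g] v' by blast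
  thus ?thesis using W v' unfolding induced_def Gv_edges_def by auto
qed

lemma graph_induced: "graph V E \<Longrightarrow> W \<subseteq> V \<Longrightarrow> graph W (induced E W)"
  unfolding graph_def induced_def
proof (intro conjI ballI)
  assume a: "finite V \<and> (\<forall>e\<in>E. \<exists>a b. a \<in> V \<and> b \<in> V \<and> a \<noteq> b \<and> e = {a, b})" "W \<subseteq> V"
  show "finite W" using a finite_subset by blast
  fix e assume "e \<in> {e \<in> E. e \<subseteq> W}"
  then obtain a b where "a \<noteq> b" "e = {a,b}" "e \<subseteq> W" using a by blast
  thus "\<exists>a b. a \<in> W \<and> b \<in> W \<and> a \<noteq> b \<and> e = {a, b}" by blast
qed

lemma Gv_edge_cases:
  assumes "e \<in> Gv_edges V E v v'"
  shows "e \<in> E \<or> e = {v', v} \<or> (\<exists>u. u \<in> V \<and> {v, u} \<in> E \<and> e = {v', u})"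
  using assms unfolding Gv_edges_def by blast

lemma E_sub_Gv: "E \<subseteq> Gv_edges V E v v'"
  unfolding Gv_edges_def by blast

lemma reach_Gv:
  assumes g: "graph V E" and v: "v \<in> V" and v': "v' \<notin> V" and xy: "x \<in> V" "y \<in> V"
  shows "reach (insert v' V) (Gv_edges V E v v') x y \<longleftrightarrow> reach V E x y"
proof
  assume "reach V E x y"
  thus "reach (insert v' V) (Gv_edges V E v v') x y"
    by (rule reach_mono) (auto simp: E_sub_Gv)
next
  assume r: "reach (insert v' V) (Gv_edges V E v v') x y"
  define f where "f = id(v' := v)"
  have fx: "f x = x" "f y = y" using xy v' by (auto simp: f_def)
  have "reach V E (f x) (f y)"
  proof (rule reach_map[OF r])
    show "f x \<in> V" using fx xy by simp
    fix a b assume ab: "a \<in> insert v' V" "b \<in> insert v' V" "{a, b} \<in> Gv_edges V E v v'"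
    show "(f a \<in> V \<and> f b \<in> V \<and> {f a, f b} \<in> E) \<or> f a = f b"
    proof (cases "a = v' \<or> b = v'")
      case False
      hence "{a,b} \<notin> {{v', v}}" "\<forall>u. {a,b} \<noteq> {v', u}" by auto
      hence "{a,b} \<in> E" using Gv_edge_cases[OF ab(3)] by blast
      thus ?thesis using False ab by (auto simp: f_def)
    next
      case True
      have nE: "{a,b} \<notin> E" using True graph_edge[OF g, of "{a,b}"] v' by blast
      show ?thesis
      proof (cases "{a,b} = {v', v}")
        case True
        thus ?thesis by (auto simp: f_def doubleton_eq_iff)
      next
        case False
        then obtain u where u: "u \<in> V" "{v, u} \<in> E" "{a,b} = {v', u}" using Gv_edge_cases[OF ab(3)] nE by blast
        have "u \<noteq> v'" using u v' by blast
        thus ?thesis using u v v' by (auto simp: f_def doubleton_eq_iff insert_commute)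
      qed
    qed
  qed
  thus "reach V E x y" using fx by simp
qed

lemma reach_Gv_v':
  assumes g: "graph V E" and v: "v \<in> V" and v': "v' \<notin> V" and x: "x \<in> V"
  shows "reach (insert v' V) (Gv_edges V E v v') x v' \<longleftrightarrow> reach V E x v"
proof -
  let ?R = "reach (insert v' V) (Gv_edges V E v v')"
  have e1: "?R v' v" by (rule reach_edge) (use v in \<open>auto simp: Gv_edges_def\<close>)
  have e2: "?R v v'" using reach_sym[OF e1] .
  show ?thesis
  proof
    assume "?R x v'" thus "reach V E x v" using reach_trans[OF _ e1] reach_Gv[OF g v v' x v] by blast
  next
    assume "reach V E x v" thus "?R x v'" using reach_trans[OF _ e2] reach_Gv[OF g v v' x v] by blast
  qed
qed

lemma conn_Gv:
  assumes g: "graph V E" and v: "v \<in> V" and v': "v' \<notin> V"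
  shows "connected_graph (insert v' V) (Gv_edges V E v v') \<longleftrightarrow> connected_graph V E"
proof
  assume c: "connected_graph (insert v' V) (Gv_edges V E v v')"
  show "connected_graph V E" unfolding connected_graph_def
    using v c reach_Gv[OF g v v'] unfolding connected_graph_def by blast
next
  assume c: "connected_graph V E"
  let ?R = "reach (insert v' V) (Gv_edges V E v v')"
  have a: "?R x y" if "x \<in> V" "y \<in> V" for x y
    using c that reach_Gv[OF g v v'] unfolding connected_graph_def by blast
  have b: "?R x v'" if "x \<in> V" for x
    using c that v reach_Gv_v'[OF g v v'] unfolding connected_graph_def by blast
  have d: "?R v' v'" by (rule reach_refl) simp
  show "connected_graph (insert v' V) (Gv_edges V E v v')"
    unfolding connected_graph_def
  proof (intro conjI ballI)
    show "insert v' V \<noteq> {}" by simp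
    fix x y assume "x \<in> insert v' V" "y \<in> insert v' V"
    thus "?R x y"
    proof (elim insertE)
      assume "x = v'" "y = v'" thus ?thesis using d by simp
    next
      assume "x = v'" "y \<in> V" thus ?thesis using reach_sym[OF b[of y]] by simp
    next
      assume "x \<in> V" "y = v'" thus ?thesis using b[of x] by simp
    next
      assume "x \<in> V" "y \<in> V" thus ?thesis using a by simp
    qed
  qed
qed


lemma comps_Gv:
  assumes g: "graph V E" and v: "v \<in> V" and v': "v' \<notin> V"
  shows "comps (insert v' V) (Gv_edges V E v v') =
         insert (insert v' (cmp V E v)) (comps V E - {cmp V E v})"
proof -
  let ?R = "reach (insert v' V) (Gv_edges V E v v')"
  let ?c = "cmp (insert v' V) (Gv_edges V E v v')"
  let ?C0 = "cmp V E v"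
  have h3: "x \<in> ?C0 \<longleftrightarrow> cmp V E x = ?C0" if x: "x \<in> V" for x
  proof
    assume "x \<in> ?C0" hence "reach V E v x" by (simp add: cmp_def)
    thus "cmp V E x = ?C0" using comp_eq by metis
  next
    assume "cmp V E x = ?C0" thus "x \<in> ?C0" using in_comp[OF x] by metis
  qed
  have inC0: "x \<in> ?C0 \<longleftrightarrow> reach V E x v" if x: "x \<in> V" for x
    using reach_sym x by (auto simp: cmp_def)
  have h1: "?c x = (if x \<in> ?C0 then insert v' (cmp V E x) else cmp V E x)" if x: "x \<in> V" for x
  proof -
    have "y \<in> ?c x \<longleftrightarrow> y \<in> (if x \<in> ?C0 then insert v' (cmp V E x) else cmp V E x)" for y
    proof (cases "y = v'")
      case True
      thus ?thesis using reach_Gv_v'[OF g v v' x] inC0[OF x] v' by (auto simp: cmp_def)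
    next
      case False
      hence "y \<in> ?c x \<longleftrightarrow> y \<in> V \<and> reach V E x y" using reach_Gv[OF g v v' x] by (auto simp: cmp_def)
      thus ?thesis using False by (auto simp: cmp_def)
    qed
    thus ?thesis by blast
  qed
  have h2: "?c v' = insert v' ?C0"
  proof -
    have "y \<in> ?c v' \<longleftrightarrow> y \<in> insert v' ?C0" for y
    proof (cases "y = v'")
      case True thus ?thesis by (simp add: cmp_def reach_refl)
    next
      case False
      have "y \<in> ?c v' \<longleftrightarrow> y \<in> V \<and> ?R y v'" using False reach_sym by (auto simp: cmp_def)
      also have "\<dots> \<longleftrightarrow> y \<in> V \<and> reach V E y v" using reach_Gv_v'[OF g v v'] by blast
      also have "\<dots> \<longleftrightarrow> y \<in> ?C0" using inC0[of y] comp_sub[of V E v] by blast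
      finally show ?thesis using False by simp
    qed
    thus ?thesis by blast
  qed
  show ?thesis
    unfolding comps_comp
  proof
    show "?c ` insert v' V \<subseteq> insert (insert v' ?C0) (cmp V E ` V - {?C0})"
    proof
      fix D assume "D \<in> ?c ` insert v' V"
      then obtain z where z: "z \<in> insert v' V" "D = ?c z" by blast
      show "D \<in> insert (insert v' ?C0) (cmp V E ` V - {?C0})"
      proof (cases "z = v'")
        case True thus ?thesis using z h2 by simp
      next
        case False
        hence zV: "z \<in> V" using z by simp
        show ?thesis
        proof (cases "z \<in> ?C0")
          case True thus ?thesis using z h1[OF zV] h3[OF zV] by simp
        next
          case False thus ?thesis using z h1[OF zV] h3[OF zV] zV by simp
        qed
      qed
    qed
    show "insert (insert v' ?C0) (cmp V E ` V - {?C0}) \<subseteq> ?c ` insert v' V"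
    proof
      fix D assume D: "D \<in> insert (insert v' ?C0) (cmp V E ` V - {?C0})"
      show "D \<in> ?c ` insert v' V"
      proof (cases "D = insert v' ?C0")
        case True thus ?thesis using h2 by (metis insertI1 imageI)
      next
        case False
        then obtain z where z: "z \<in> V" "D = cmp V E z" "cmp V E z \<noteq> ?C0" using D by blast
        hence "?c z = D" using h1[OF z(1)] h3[OF z(1)] by simp
        thus ?thesis using z(1) by (metis insertI2 imageI)
      qed
    qed
  qed
qed

abbreviation rho where "rho v v' \<equiv> transpose v v'"

lemma rho_V: "v \<in> V \<Longrightarrow> rho v v' ` insert v' V = insert v' V"
  by (rule transpose_image_eq) simp

lemma img_img_rho: "img (rho v v') (img (rho v v') X) = X"
  by (simp add: image_comp)

lemma rho_E_sub:
  assumes g: "graph V E" and v: "v \<in> V" and v': "v' \<notin> V"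
  shows "img (rho v v') (Gv_edges V E v v') \<subseteq> Gv_edges V E v v'"
proof
  fix e' assume "e' \<in> img (rho v v') (Gv_edges V E v v')"
  then obtain e where e: "e \<in> Gv_edges V E v v'" "e' = rho v v' ` e" by blast
  have vv': "v \<noteq> v'" using v v' by blast
  show "e' \<in> Gv_edges V E v v'"
    using Gv_edge_cases[OF e(1)]
  proof (elim disjE exE conjE)
    assume eE: "e \<in> E"
    then obtain a b where ab: "a \<in> V" "b \<in> V" "a \<noteq> b" "e = {a,b}" using g unfolding graph_def by blast
    have av: "a \<noteq> v'" "b \<noteq> v'" using ab v' by auto
    show ?thesis
    proof (cases "a = v")
      case True
      hence "e' = {v', b}" "b \<noteq> v" using e(2) ab av by auto
      moreover have "{v, b} \<in> E" using eE ab True by simp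
      ultimately show ?thesis using ab unfolding Gv_edges_def by blast
    next
      case False
      show ?thesis
      proof (cases "b = v")
        case True
        hence "e' = {a, v'}" using e(2) ab av False by auto
        moreover have "{v, a} \<in> E" using eE ab True by (simp add: insert_commute)
        ultimately show ?thesis using ab unfolding Gv_edges_def by (blast intro: insert_commute)
      next
        case False2: False
        hence "e' = e" using e(2) ab av False by auto
        thus ?thesis using eE unfolding Gv_edges_def by blast
      qed
    qed
  next
    assume "e = {v', v}"
    hence "e' = {v, v'}" using e(2) by auto
    thus ?thesis unfolding Gv_edges_def by (auto simp: insert_commute)
  next
    fix u assume u: "u \<in> V" "{v, u} \<in> E" "e = {v', u}"
    have "u \<noteq> v" using u(2) g unfolding graph_def by (auto simp: doubleton_eq_iff)
    moreover have "u \<noteq> v'" using u v' by blast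
    ultimately have "e' = {v, u}" using e(2) u(3) by auto
    thus ?thesis using u(2) unfolding Gv_edges_def by blast
  qed
qed

lemma rho_E:
  assumes g: "graph V E" and v: "v \<in> V" and v': "v' \<notin> V"
  shows "img (rho v v') (Gv_edges V E v v') = Gv_edges V E v v'"
proof
  show "img (rho v v') (Gv_edges V E v v') \<subseteq> Gv_edges V E v v'" using rho_E_sub[OF assms] .
  have "img (rho v v') (img (rho v v') (Gv_edges V E v v')) \<subseteq> img (rho v v') (Gv_edges V E v v')"
    using rho_E_sub[OF assms] by (rule image_mono)
  thus "Gv_edges V E v v' \<subseteq> img (rho v v') (Gv_edges V E v v')" by (simp only: img_img_rho)
qed

lemma st_rho:
  assumes g: "graph V E" and v: "v \<in> V" and v': "v' \<notin> V"
    and X: "search_tree (insert v' V) (Gv_edges V E v v') X"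
  shows "search_tree (insert v' V) (Gv_edges V E v v') (relabel (rho v v') X)"
proof -
  have "search_tree (rho v v' ` insert v' V) (img (rho v v') (Gv_edges V E v v')) (relabel (rho v v') X)"
    by (rule st_relabel[OF X]) (simp add: inj_transpose)
  thus ?thesis using rho_V[OF v] rho_E[OF g v v'] by simp
qed


section \<open>Insertion, recursively\<close>

definition graft :: "'a \<Rightarrow> 'a set set \<Rightarrow> 'a rtree \<Rightarrow> 'a rtree" where
  "graft r R Y = (r, R \<union> insert {r, fst Y} (snd Y))"

definition restF :: "'a set set \<Rightarrow> 'a \<Rightarrow> 'a rtree \<Rightarrow> 'a set set" where
  "restF F r S = F - insert {r, fst S} (snd S)"

lemma ins_0: "ins T 0 x v = (x, insert {x, fst T} (snd T))"
  by (simp add: ins_def)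

lemma depth_root: "decomp V E r F t \<Longrightarrow> depth (r, F) r = 0"
  by (simp add: depth_def root_path_root)

lemma child_path:
  assumes dc: "decomp V E r F t" and C0: "C0 \<in> comps (V - {r}) (induced E (V - {r}))" and v: "v \<in> C0"
  shows "tree_path (snd (t C0)) (root_path (t C0) v)" "hd (root_path (t C0) v) = fst (t C0)"
    "root_path (t C0) v \<noteq> []"
    "depth (r, F) v = Suc (depth (t C0) v)"
    "depth (t C0) v = length (root_path (t C0) v) - 1"
proof -
  have p0: "root_path (t C0) v \<in> PS (t C0) v" using root_path_in[OF decomp_good(5)[OF dc C0] v] .
  thus tp: "tree_path (snd (t C0)) (root_path (t C0) v)" "hd (root_path (t C0) v) = fst (t C0)"
    by (auto simp: PS_def)
  thus ne: "root_path (t C0) v \<noteq> []" by (simp add: tree_path_def)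
  show "depth (r, F) v = Suc (depth (t C0) v)"
    using root_path_child[OF dc C0 v] ne by (simp add: depth_def)
  show "depth (t C0) v = length (root_path (t C0) v) - 1" by (simp add: depth_def)
qed

lemma set_aux: "S \<subseteq> F \<Longrightarrow> a \<in> F \<Longrightarrow> a \<notin> S \<Longrightarrow> e \<in> S \<Longrightarrow>
  (F - {e}) \<union> N = (F - insert a S) \<union> insert a ((S - {e}) \<union> N)"
  by auto

lemma ins_Suc:
  assumes dc: "decomp V E r F t" and C0: "C0 \<in> comps (V - {r}) (induced E (V - {r}))" and v: "v \<in> C0"
    and i: "i \<le> depth (t C0) v"
  shows "ins (r, F) (Suc i) x v = graft r (restF F r (t C0)) (ins (t C0) i x v)"
proof -
  define S where "S = t C0"
  define p0 where "p0 = root_path S v"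
  note cp = child_path[OF dc C0 v, folded S_def, folded p0_def]
  have rp: "root_path (r, F) v = r # p0" using root_path_child[OF dc C0 v] by (simp add: S_def p0_def)
  have "length p0 > 0" using cp(3) by simp
  hence il: "i < length p0" using i cp(5)[unfolded S_def] by linarith
  have sub: "snd S \<subseteq> F" "{r, fst S} \<in> F" using decomp_sub[OF dc C0] by (auto simp: S_def)
  have nS: "{r, fst S} \<notin> snd S" using decomp_good(3,4)[OF dc C0] by (auto simp: S_def)
  show ?thesis
  proof (cases i)
    case 0
    have h: "p0 ! 0 = fst S" using cp by (simp add: hd_conv_nth)
    have "ins (r, F) (Suc i) x v = (r, (F - {{r, fst S}}) \<union> {{r, x}, {x, fst S}})"
      using 0 h by (simp add: ins_def rp)
    moreover have "ins S i x v = (x, insert {x, fst S} (snd S))" using 0 by (simp add: ins_def)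
    moreover have "(F - {{r, fst S}}) \<union> {{r, x}, {x, fst S}} = restF F r S \<union> insert {r, x} (insert {x, fst S} (snd S))"
      using sub nS unfolding restF_def by blast
    ultimately show ?thesis by (simp add: graft_def S_def)
  next
    case (Suc k)
    have e: "{p0 ! k, p0 ! Suc k} \<in> snd S" using cp(1) il Suc by (simp add: tree_path_def)
    have "ins (r, F) (Suc i) x v = (r, (F - {{p0 ! k, p0 ! Suc k}}) \<union> {{p0 ! k, x}, {x, p0 ! Suc k}})"
      using Suc by (simp add: ins_def rp)
    moreover have "ins S i x v = (fst S, (snd S - {{p0 ! k, p0 ! Suc k}}) \<union> {{p0 ! k, x}, {x, p0 ! Suc k}})"
      using Suc by (simp add: ins_def p0_def Let_def)
    moreover have "(F - {{p0 ! k, p0 ! Suc k}}) \<union> {{p0 ! k, x}, {x, p0 ! Suc k}} =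
       restF F r S \<union> insert {r, fst S} ((snd S - {{p0 ! k, p0 ! Suc k}}) \<union> {{p0 ! k, x}, {x, p0 ! Suc k}})"
      unfolding restF_def by (rule set_aux[OF sub nS e])
    ultimately show ?thesis by (simp add: graft_def S_def)
  qed
qed

lemma restF_disj:
  assumes dc: "decomp V E r F t" and C0: "C0 \<in> comps (V - {r}) (induced E (V - {r}))"
    and e: "e \<in> restF F r (t C0)"
  shows "e \<inter> C0 = {}" "e \<subseteq> V"
proof -
  let ?K = "comps (V - {r}) (induced E (V - {r}))"
  have eF: "e \<in> F" and en: "e \<notin> insert {r, fst (t C0)} (snd (t C0))" using e by (auto simp: restF_def)
  obtain C where C: "C \<in> ?K" "e \<in> insert {r, fst (t C)} (snd (t C))" using eF dc unfolding decomp_def by blast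
  have "C \<noteq> C0" using C en by blast
  hence disj: "C \<inter> C0 = {}" using comps_disj[OF C(1) C0] by blast
  have "e \<subseteq> insert r C" using C(2) decomp_good(2,4)[OF dc C(1)] by blast
  moreover have "r \<notin> C0" "C \<subseteq> V" using decomp_good(3)[OF dc C0] decomp_good(3)[OF dc C(1)] by auto
  ultimately show "e \<inter> C0 = {}" "e \<subseteq> V" using disj dc unfolding decomp_def by auto
qed

lemma restF_eq:
  assumes dc: "decomp V E r F t" and C0: "C0 \<in> comps (V - {r}) (induced E (V - {r}))"
  shows "restF F r (t C0) = (\<Union>C\<in>comps (V - {r}) (induced E (V - {r})) - {C0}. insert {r, fst (t C)} (snd (t C)))"
    "F = restF F r (t C0) \<union> insert {r, fst (t C0)} (snd (t C0))"
proof -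
  let ?K = "comps (V - {r}) (induced E (V - {r}))"
  have F: "F = (\<Union>C\<in>?K. insert {r, fst (t C)} (snd (t C)))" using dc unfolding decomp_def by blast
  have nin: "e \<notin> insert {r, fst (t C0)} (snd (t C0))" if C: "C \<in> ?K" "C \<noteq> C0" and e: "e \<in> insert {r, fst (t C)} (snd (t C))" for C e
  proof
    assume e0: "e \<in> insert {r, fst (t C0)} (snd (t C0))"
    obtain x where x: "x \<in> e" "x \<in> C"
    proof (cases "e = {r, fst (t C)}")
      case True thus ?thesis using that decomp_good(2)[OF dc C(1)] by blast
    next
      case False
      hence "e \<in> snd (t C)" using e by blast
      thus ?thesis using that decomp_good(1,4)[OF dc C(1)] good_edge_ne[OF decomp_good(1)[OF dc C(1)]] by blast
    qed
    have "e \<subseteq> insert r C0" using e0 decomp_good(2,4)[OF dc C0] by blast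
    moreover have "x \<noteq> r" using x decomp_good(3)[OF dc C(1)] by blast
    ultimately have "x \<in> C0" using x by blast
    thus False using comps_disj[OF C(1) C0 x(2)] C(2) by blast
  qed
  show "restF F r (t C0) = (\<Union>C\<in>?K - {C0}. insert {r, fst (t C)} (snd (t C)))"
  proof
    show "restF F r (t C0) \<subseteq> (\<Union>C\<in>?K - {C0}. insert {r, fst (t C)} (snd (t C)))"
      unfolding restF_def using F by blast
    show "(\<Union>C\<in>?K - {C0}. insert {r, fst (t C)} (snd (t C))) \<subseteq> restF F r (t C0)"
      unfolding restF_def using F nin by blast
  qed
  show "F = restF F r (t C0) \<union> insert {r, fst (t C0)} (snd (t C0))"
    using decomp_sub[OF dc C0] unfolding restF_def by blast
qed

lemma relabel_graft:
  assumes "r \<noteq> a" "r \<noteq> b" "\<And>e. e \<in> R \<Longrightarrow> a \<notin> e \<and> b \<notin> e"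
  shows "relabel (transpose a b) (graft r R Y) = graft r R (relabel (transpose a b) Y)"
proof -
  have "transpose a b ` e = e" if "e \<in> R" for e
    using assms(3)[OF that] by (intro transpose_image_eq) simp
  hence "img (transpose a b) R = R" by force
  thus ?thesis using assms(1,2) by (simp add: relabel_def graft_def image_Un)
qed


lemma Pset_mem: "X \<in> Pset T v v' \<longleftrightarrow> (\<exists>i \<le> depth T v. X = ins T i v' v \<or> X = relabel (rho v v') (ins T i v' v))"
  by (auto simp: Pset_def)

lemma Pset_root:
  assumes dc: "decomp V E v F t"
  shows "X \<in> Pset (v, F) v v' \<longleftrightarrow> X = ins (v, F) 0 v' v \<or> X = relabel (rho v v') (ins (v, F) 0 v' v)"
  unfolding Pset_mem depth_root[OF dc] by simp

lemma Pset_child: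
  assumes dc: "decomp V E r F t" and C0: "C0 \<in> comps (V - {r}) (induced E (V - {r}))" and v: "v \<in> C0"
    and v': "v' \<notin> V"
  shows "X \<in> Pset (r, F) v v' \<longleftrightarrow> X = ins (r, F) 0 v' v \<or> X = relabel (rho v v') (ins (r, F) 0 v' v) \<or>
     (\<exists>Y \<in> Pset (t C0) v v'. X = graft r (restF F r (t C0)) Y)"
proof -
  let ?R = "restF F r (t C0)"
  have rv: "r \<noteq> v" "r \<noteq> v'" using decomp_good(3)[OF dc C0] v v' dc unfolding decomp_def by auto
  have Re: "\<And>e. e \<in> ?R \<Longrightarrow> v \<notin> e \<and> v' \<notin> e" using restF_disj[OF dc C0] v v' by blast
  have ri: "relabel (rho v v') (ins (r, F) (Suc i) v' v) = graft r ?R (relabel (rho v v') (ins (t C0) i v' v))"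
    if "i \<le> depth (t C0) v" for i
    using ins_Suc[OF dc C0 v that] relabel_graft[OF rv Re] by simp
  have d: "depth (r, F) v = Suc (depth (t C0) v)" using child_path(4)[OF dc C0 v] .
  show ?thesis
  proof
    assume "X \<in> Pset (r, F) v v'"
    then obtain i where i: "i \<le> depth (r, F) v" "X = ins (r, F) i v' v \<or> X = relabel (rho v v') (ins (r, F) i v' v)"
      unfolding Pset_mem by blast
    show "X = ins (r, F) 0 v' v \<or> X = relabel (rho v v') (ins (r, F) 0 v' v) \<or>
     (\<exists>Y \<in> Pset (t C0) v v'. X = graft r ?R Y)"
    proof (cases i)
      case 0 thus ?thesis using i by blast
    next
      case (Suc j)
      hence j: "j \<le> depth (t C0) v" using i d by simp
      have "ins (t C0) j v' v \<in> Pset (t C0) v v'" "relabel (rho v v') (ins (t C0) j v' v) \<in> Pset (t C0) v v'"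
        using j unfolding Pset_mem by blast+
      thus ?thesis using i(2) Suc ins_Suc[OF dc C0 v j] ri[OF j] by metis
    qed
  next
    assume "X = ins (r, F) 0 v' v \<or> X = relabel (rho v v') (ins (r, F) 0 v' v) \<or>
     (\<exists>Y \<in> Pset (t C0) v v'. X = graft r ?R Y)"
    thus "X \<in> Pset (r, F) v v'"
    proof (elim disjE bexE)
      assume "X = ins (r, F) 0 v' v" thus ?thesis unfolding Pset_mem by blast
    next
      assume "X = relabel (rho v v') (ins (r, F) 0 v' v)" thus ?thesis unfolding Pset_mem by blast
    next
      fix Y assume Y: "Y \<in> Pset (t C0) v v'" "X = graft r ?R Y"
      then obtain j where j: "j \<le> depth (t C0) v" "Y = ins (t C0) j v' v \<or> Y = relabel (rho v v') (ins (t C0) j v' v)"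
        unfolding Pset_mem by blast
      have "Suc j \<le> depth (r, F) v" using j d by simp
      moreover have "X = ins (r, F) (Suc j) v' v \<or> X = relabel (rho v v') (ins (r, F) (Suc j) v' v)"
        using j(2) Y(2) ins_Suc[OF dc C0 v j(1)] ri[OF j(1)] by metis
      ultimately show ?thesis unfolding Pset_mem by blast
    qed
  qed
qed

lemma st_conn: "search_tree V E T \<Longrightarrow> connected_graph V E"
  by (cases rule: search_tree.cases) auto

lemma L1_0:
  assumes T: "search_tree V E T" and g: "graph V E" and v: "v \<in> V" and v': "v' \<notin> V"
  shows "search_tree (insert v' V) (Gv_edges V E v v') (ins T 0 v' v)"
proof -
  have c: "connected_graph V E" using st_conn[OF T] .
  have W: "insert v' V - {v'} = V" using v' by blast
  have I: "induced (Gv_edges V E v v') V = E"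
    using Gv_induced_C[OF v', of V E v] graph_edge[OF g] unfolding induced_def by blast
  have K: "comps (insert v' V - {v'}) (induced (Gv_edges V E v v') (insert v' V - {v'})) = {V}"
    unfolding W I using comps_connected[OF c] .
  show ?thesis unfolding ins_0
  proof (rule search_tree.st[where t = "\<lambda>_. T"])
    show "connected_graph (insert v' V) (Gv_edges V E v v')" using conn_Gv[OF g v v'] c by simp
    show "v' \<in> insert v' V" by simp
    show "\<forall>C\<in>comps (insert v' V - {v'}) (induced (Gv_edges V E v v') (insert v' V - {v'})).
        search_tree C (induced (Gv_edges V E v v') C) T"
      unfolding K using T I by simp
    show "insert {v', fst T} (snd T) = (\<Union>C\<in>comps (insert v' V - {v'}) (induced (Gv_edges V E v v') (insert v' V - {v'})).
        insert {v', fst T} (snd T))" unfolding K by simp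
  qed
qed

lemma comps_minus_r:
  assumes g: "graph V E" and r: "r \<in> V" and v: "v \<in> V" "r \<noteq> v" and v': "v' \<notin> V"
    and C0: "C0 \<in> comps (V - {r}) (induced E (V - {r}))" "v \<in> C0"
  shows "comps (insert v' V - {r}) (induced (Gv_edges V E v v') (insert v' V - {r})) =
     insert (insert v' C0) (comps (V - {r}) (induced E (V - {r})) - {C0})"
proof -
  have rv': "r \<noteq> v'" using r v' by blast
  have W: "insert v' V - {r} = insert v' (V - {r})" using rv' by blast
  have vW: "v \<in> V - {r}" using v by blast
  have I: "induced (Gv_edges V E v v') (insert v' (V - {r})) = Gv_edges (V - {r}) (induced E (V - {r})) v v'"
    by (rule Gv_induced_ins[OF g _ vW v']) blast
  have gW: "graph (V - {r}) (induced E (V - {r}))" using graph_induced[OF g] by blast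
  have c0: "C0 = cmp (V - {r}) (induced E (V - {r})) v" using comps_eq_comp[OF C0] .
  show ?thesis unfolding W I c0 by (rule comps_Gv[OF gW vW]) (use v' in blast)
qed

lemma graft_st:
  assumes dc: "decomp V E r F t" and g: "graph V E"
    and C0: "C0 \<in> comps (V - {r}) (induced E (V - {r}))" and v: "v \<in> C0" and v': "v' \<notin> V"
    and Y: "search_tree (insert v' C0) (Gv_edges C0 (induced E C0) v v') Y"
  shows "search_tree (insert v' V) (Gv_edges V E v v') (graft r (restF F r (t C0)) Y)"
proof -
  let ?K = "comps (V - {r}) (induced E (V - {r}))"
  let ?K' = "comps (insert v' V - {r}) (induced (Gv_edges V E v v') (insert v' V - {r}))"
  have C0V: "C0 \<subseteq> V - {r}" using decomp_good(3)[OF dc C0] .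
  have r: "r \<in> V" and c: "connected_graph V E" using dc unfolding decomp_def by auto
  have vV: "v \<in> V" "r \<noteq> v" using C0V v by auto
  have K': "?K' = insert (insert v' C0) (?K - {C0})" using comps_minus_r[OF g r vV v' C0 v] .
  define t' where "t' C = (if C = insert v' C0 then Y else t C)" for C
  have nK: "insert v' C0 \<notin> ?K - {C0}"
  proof
    assume "insert v' C0 \<in> ?K - {C0}"
    hence "insert v' C0 \<subseteq> V - {r}" using comps_sub by blast
    thus False using v' by blast
  qed
  have IC0: "induced (Gv_edges V E v v') (insert v' C0) = Gv_edges C0 (induced E C0) v v'"
    by (rule Gv_induced_ins[OF g _ v v']) (use C0V in blast)
  show ?thesis unfolding graft_def
  proof (rule search_tree.st[where t = t'])
    show "connected_graph (insert v' V) (Gv_edges V E v v')" using conn_Gv[OF g vV(1) v'] c by simp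
    show "r \<in> insert v' V" using r by simp
    show "\<forall>C\<in>?K'. search_tree C (induced (Gv_edges V E v v') C) (t' C)"
    proof
      fix C assume "C \<in> ?K'"
      hence "C = insert v' C0 \<or> C \<in> ?K - {C0}" using K' by blast
      thus "search_tree C (induced (Gv_edges V E v v') C) (t' C)"
      proof
        assume "C = insert v' C0" thus ?thesis using Y IC0 by (simp add: t'_def)
      next
        assume CK: "C \<in> ?K - {C0}"
        hence ne: "C \<noteq> insert v' C0" using nK by blast
        have "v' \<notin> C" using comps_sub[of C] CK v' by blast
        hence "induced (Gv_edges V E v v') C = induced E C" by (rule Gv_induced_C)
        thus ?thesis using decomp_good(5)[OF dc] CK ne by (simp add: t'_def)
      qed
    qed
    have UU: "(\<Union>C\<in>?K'. insert {r, fst (t' C)} (snd (t' C))) =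
        insert {r, fst Y} (snd Y) \<union> (\<Union>C\<in>?K - {C0}. insert {r, fst (t C)} (snd (t C)))"
    proof -
      have eq: "t' C = t C" if "C \<in> ?K - {C0}" for C
      proof -
        have "C \<noteq> insert v' C0" using that nK by blast
        thus ?thesis by (simp add: t'_def)
      qed
      have "(\<Union>C\<in>?K - {C0}. insert {r, fst (t' C)} (snd (t' C))) = (\<Union>C\<in>?K - {C0}. insert {r, fst (t C)} (snd (t C)))"
        by (rule SUP_cong[OF refl]) (simp add: eq)
      moreover have "t' (insert v' C0) = Y" by (simp add: t'_def)
      ultimately show ?thesis unfolding K' UN_insert by simp
    qed
    show "restF F r (t C0) \<union> insert {r, fst Y} (snd Y) = (\<Union>C\<in>?K'. insert {r, fst (t' C)} (snd (t' C)))"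
      unfolding UU restF_eq(1)[OF dc C0] by (rule Un_commute)
  qed
qed

lemma L1:
  "search_tree V E T \<Longrightarrow> graph V E \<Longrightarrow> v \<in> V \<Longrightarrow> v' \<notin> V \<Longrightarrow> X \<in> Pset T v v' \<Longrightarrow>
   search_tree (insert v' V) (Gv_edges V E v v') X"
proof (induction arbitrary: v X rule: search_tree.induct)
  case (st V E r t F)
  have "\<forall>C\<in>comps (V - {r}) (induced E (V - {r})). search_tree C (induced E C) (t C)" using st.IH by blast
  hence dc: "decomp V E r F t" unfolding decomp_def by (intro conjI st.hyps)
  have T: "search_tree V E (r, F)" unfolding st_iff using dc by blast
  have i0: "search_tree (insert v' V) (Gv_edges V E v v') (ins (r, F) 0 v' v)"
    using L1_0[OF T st.prems(1-3)] .
  have i0': "search_tree (insert v' V) (Gv_edges V E v v') (relabel (rho v v') (ins (r, F) 0 v' v))"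
    using st_rho[OF st.prems(1-3) i0] .
  show ?case
  proof (cases "r = v")
    case True
    thus ?thesis using Pset_root[of V E v F t X v'] dc st.prems(4) i0 i0' by auto
  next
    case False
    then obtain C0 where C0: "C0 \<in> comps (V - {r}) (induced E (V - {r}))" "v \<in> C0"
      using comps_cover[of v "V - {r}"] st.prems(2) by blast
    have C0V: "C0 \<subseteq> V" using decomp_good(3)[OF dc C0(1)] by blast
    have h: "X = ins (r, F) 0 v' v \<or> X = relabel (rho v v') (ins (r, F) 0 v' v) \<or>
     (\<exists>Y \<in> Pset (t C0) v v'. X = graft r (restF F r (t C0)) Y)"
      using Pset_child[OF dc C0 st.prems(3)] st.prems(4) by blast
    show ?thesis
    proof (cases "\<exists>Y \<in> Pset (t C0) v v'. X = graft r (restF F r (t C0)) Y")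
      case True
      then obtain Y where Y: "Y \<in> Pset (t C0) v v'" "X = graft r (restF F r (t C0)) Y" by blast
      have gC: "graph C0 (induced E C0)" using graph_induced[OF st.prems(1) C0V] .
      have "search_tree (insert v' C0) (Gv_edges C0 (induced E C0) v v') Y"
        using st.IH C0(1) gC C0(2) st.prems(3) C0V Y(1) by blast
      thus ?thesis using graft_st[OF dc st.prems(1) C0 st.prems(3)] Y(2) by simp
    next
      case False thus ?thesis using h i0 i0' by auto
    qed
  qed
qed


lemma induced_Gv_V: "graph V E \<Longrightarrow> v' \<notin> V \<Longrightarrow> induced (Gv_edges V E v v') V = E"
  using Gv_induced_C[of v' V V E v] graph_edge[of V E] unfolding induced_def by blast

lemma L2_root:
  assumes g: "graph V E" and v: "v \<in> V" and v': "v' \<notin> V"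
    and X: "search_tree (insert v' V) (Gv_edges V E v v') X" and r: "fst X = v'"
  shows "\<exists>T. search_tree V E T \<and> X = ins T 0 v' v"
proof -
  obtain F' where XF: "X = (v', F')" using r by (cases X) auto
  obtain t' where dc: "decomp (insert v' V) (Gv_edges V E v v') v' F' t'" using X XF st_iff by metis
  have c: "connected_graph V E" using dc conn_Gv[OF g v v'] unfolding decomp_def by blast
  have W: "insert v' V - {v'} = V" using v' by blast
  have K: "comps (insert v' V - {v'}) (induced (Gv_edges V E v v') (insert v' V - {v'})) = {V}"
    unfolding W induced_Gv_V[OF g v'] using comps_connected[OF c] .
  have T: "search_tree V E (t' V)" using dc induced_Gv_V[OF g v', of v] unfolding decomp_def K by simp
  have "F' = insert {v', fst (t' V)} (snd (t' V))" using dc unfolding decomp_def K by simp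
  hence "X = ins (t' V) 0 v' v" using XF by (simp add: ins_0)
  thus ?thesis using T by blast
qed

lemma ins0_in_Pset: "ins T 0 v' v \<in> Pset T v v'" "relabel (rho v v') (ins T 0 v' v) \<in> Pset T v v'"
  unfolding Pset_mem by blast+

lemma L2:
  "graph V E \<Longrightarrow> connected_graph V E \<Longrightarrow> v \<in> V \<Longrightarrow> v' \<notin> V \<Longrightarrow>
   search_tree (insert v' V) (Gv_edges V E v v') X \<Longrightarrow> \<exists>T. search_tree V E T \<and> X \<in> Pset T v v'"
proof (induction "card V" arbitrary: V E v X rule: less_induct)
  case less
  note g = less.prems(1) and c = less.prems(2) and v = less.prems(3) and v' = less.prems(4)
    and Xst = less.prems(5)
  obtain q F' where X: "X = (q, F')" by (cases X)
  obtain t' where dc': "decomp (insert v' V) (Gv_edges V E v v') q F' t'" using Xst X st_iff by metis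
  show ?case
  proof (cases "q = v'")
    case True
    then obtain T where "search_tree V E T" "X = ins T 0 v' v" using L2_root[OF g v v' Xst] X by auto
    thus ?thesis using ins0_in_Pset(1)[of T v' v] by (intro exI[of _ T]) simp
  next
    case qv': False
    show ?thesis
    proof (cases "q = v")
      case True
      have X': "search_tree (insert v' V) (Gv_edges V E v v') (relabel (rho v v') X)" using st_rho[OF g v v' Xst] .
      have "fst (relabel (rho v v') X) = v'" using X True by (simp add: relabel_def)
      then obtain T where T: "search_tree V E T" "relabel (rho v v') X = ins T 0 v' v" using L2_root[OF g v v' X'] by blast
      have "X = relabel (rho v v') (ins T 0 v' v)" using T(2) relabel_transpose_twice[of v v' X] by metis
      thus ?thesis using T(1) ins0_in_Pset(2)[where T=T and v=v and v'=v'] by (intro exI[of _ T]) simp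
    next
      case qv: False
      have qV: "q \<in> V" using dc' qv' unfolding decomp_def by blast
      let ?K = "comps (V - {q}) (induced E (V - {q}))"
      let ?K' = "comps (insert v' V - {q}) (induced (Gv_edges V E v v') (insert v' V - {q}))"
      obtain C0 where C0: "C0 \<in> ?K" "v \<in> C0" using comps_cover[of v "V - {q}"] v qv by blast
      have C0V: "C0 \<subseteq> V - {q}" using comps_sub[OF C0(1)] .
      have K': "?K' = insert (insert v' C0) (?K - {C0})" using comps_minus_r[OF g qV v _ v' C0] qv by metis
      have IC0: "induced (Gv_edges V E v v') (insert v' C0) = Gv_edges C0 (induced E C0) v v'"
        by (rule Gv_induced_ins[OF g _ C0(2) v']) (use C0V in blast)
      have Y: "search_tree (insert v' C0) (Gv_edges C0 (induced E C0) v v') (t' (insert v' C0))"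
        using dc' K' IC0 unfolding decomp_def by auto
      have gC: "graph C0 (induced E C0)" using graph_induced[OF g] C0V by blast
      have v'C: "v' \<notin> C0" using C0V v' by blast
      have cC: "connected_graph C0 (induced E C0)" using st_conn[OF Y] conn_Gv[OF gC C0(2) v'C] by simp
      have fin: "finite V" using g unfolding graph_def by blast
      have "C0 \<subset> V" using C0V qV by blast
      hence "card C0 < card V" using psubset_card_mono[OF fin] by blast
      then obtain S where S: "search_tree C0 (induced E C0) S" "t' (insert v' C0) \<in> Pset S v v'"
        using less.hyps gC cC C0(2) v'C Y by blast
      define t where "t C = (if C = C0 then S else t' C)" for C
      define F where "F = (\<Union>C\<in>?K. insert {q, fst (t C)} (snd (t C)))"
      have tK: "search_tree C (induced E C) (t C)" if CK: "C \<in> ?K" for C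
      proof (cases "C = C0")
        case True thus ?thesis using S by (simp add: t_def)
      next
        case False
        hence "C \<in> ?K'" using K' CK by blast
        hence "search_tree C (induced (Gv_edges V E v v') C) (t' C)" using dc' unfolding decomp_def by blast
        moreover have "v' \<notin> C" using comps_sub[OF CK] v' by blast
        ultimately show ?thesis using False Gv_induced_C[of v' C V E v] by (simp add: t_def)
      qed
      have dc: "decomp V E q F t" unfolding decomp_def F_def using c qV tK by blast
      have tC0: "t C0 = S" by (simp add: t_def)
      have inP: "graft q (restF F q S) (t' (insert v' C0)) \<in> Pset (q, F) v v'"
        using Pset_child[OF dc C0 v'] S(2) tC0 by blast
      have eqt: "t C = t' C" if "C \<in> ?K - {C0}" for C using that by (simp add: t_def)
      have R: "restF F q S = (\<Union>C\<in>?K - {C0}. insert {q, fst (t' C)} (snd (t' C)))"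
        unfolding restF_eq(1)[OF dc C0(1), unfolded tC0] by (rule SUP_cong[OF refl]) (simp add: eqt)
      have "F' = (\<Union>C\<in>?K'. insert {q, fst (t' C)} (snd (t' C)))" using dc' unfolding decomp_def by blast
      also have "\<dots> = insert {q, fst (t' (insert v' C0))} (snd (t' (insert v' C0))) \<union> restF F q S"
        unfolding K' UN_insert R ..
      finally have "X = graft q (restF F q S) (t' (insert v' C0))" using X by (simp add: graft_def Un_commute)
      moreover have "search_tree V E (q, F)" unfolding st_iff using dc by blast
      ultimately show ?thesis using inP by blast
    qed
  qed
qed


lemma ins_edge_inj:
  assumes h: "insert {x, a1} S1 = insert {x, a2} S2" and s1: "\<forall>e\<in>S1. x \<notin> e" and s2: "\<forall>e\<in>S2. x \<notin> e"
  shows "a1 = a2 \<and> S1 = S2"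
proof -
  have n1: "{x, a1} \<notin> S2" using s2 by blast
  have n1': "{x, a1} \<notin> S1" using s1 by blast
  have n2: "{x, a2} \<notin> S2" using s2 by blast
  have "{x, a1} \<in> insert {x, a2} S2" using h by blast
  hence e: "{x, a1} = {x, a2}" using n1 by blast
  hence a: "a1 = a2" by (auto simp: doubleton_eq_iff)
  have "S1 = insert {x, a1} S1 - {{x, a1}}" using n1' by blast
  also have "\<dots> = insert {x, a2} S2 - {{x, a2}}" using h e by simp
  also have "\<dots> = S2" using n2 by blast
  finally show ?thesis using a by simp
qed

lemma ins0_inj:
  assumes g1: "good V T1" and g2: "good V T2" and v': "v' \<notin> V" and h: "ins T1 0 v' v = ins T2 0 v' v"
  shows "T1 = T2"
proof -
  have "insert {v', fst T1} (snd T1) = insert {v', fst T2} (snd T2)" using h by (simp add: ins_0)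
  moreover have "\<forall>e\<in>snd T1. v' \<notin> e" using good_edge_sub[OF g1] v' by blast
  moreover have "\<forall>e\<in>snd T2. v' \<notin> e" using good_edge_sub[OF g2] v' by blast
  ultimately have "fst T1 = fst T2 \<and> snd T1 = snd T2" by (rule ins_edge_inj)
  thus ?thesis by (simp add: prod_eq_iff)
qed

lemma Pset_cases:
  assumes dc: "decomp V E r F t" and v: "v \<in> V" and v': "v' \<notin> V" and X: "X \<in> Pset (r, F) v v'"
  shows "X = ins (r, F) 0 v' v \<or> X = relabel (rho v v') (ins (r, F) 0 v' v) \<or>
    (\<exists>C0\<in>comps (V - {r}) (induced E (V - {r})). v \<in> C0 \<and> r \<noteq> v \<and>
       (\<exists>Y \<in> Pset (t C0) v v'. X = graft r (restF F r (t C0)) Y))"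
proof (cases "r = v")
  case True thus ?thesis using Pset_root[of V E v F t X v'] dc X by blast
next
  case False
  then obtain C0 where C0: "C0 \<in> comps (V - {r}) (induced E (V - {r}))" "v \<in> C0"
    using comps_cover[of v "V - {r}"] v by blast
  show ?thesis using Pset_child[OF dc C0 v'] X C0 False by blast
qed


lemma Pset_cases_root:
  assumes dc: "decomp V E r F t" and v: "v \<in> V" and v': "v' \<notin> V" and X: "X \<in> Pset (r, F) v v'"
  shows "fst X = v' \<Longrightarrow> X = ins (r, F) 0 v' v"
    "fst X = v \<Longrightarrow> X = relabel (rho v v') (ins (r, F) 0 v' v)"
    "fst X \<noteq> v' \<Longrightarrow> fst X \<noteq> v \<Longrightarrow> (\<exists>C0\<in>comps (V - {r}) (induced E (V - {r})). v \<in> C0 \<and> r \<noteq> v \<and>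
       (\<exists>Y \<in> Pset (t C0) v v'. X = graft r (restF F r (t C0)) Y))"
proof -
  have rV: "r \<in> V" using dc unfolding decomp_def by blast
  have vv': "v \<noteq> v'" using v v' by blast
  have rv': "r \<noteq> v'" using rV v' by blast
  have f0: "fst (ins (r, F) 0 v' v) = v'" by (simp add: ins_0)
  have f1: "fst (relabel (rho v v') (ins (r, F) 0 v' v)) = v" by (simp add: ins_0 relabel_def)
  have f2: "fst (graft r R Y) = r" for R Y by (simp add: graft_def)
  note c = Pset_cases[OF dc v v' X]
  show "fst X = v' \<Longrightarrow> X = ins (r, F) 0 v' v"
  proof -
    assume h: "fst X = v'"
    have "X \<noteq> relabel (rho v v') (ins (r, F) 0 v' v)" using h f1 vv' by auto
    moreover have "X \<noteq> graft r R Y" for R Y using h f2[of R Y] rv' by auto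
    ultimately show ?thesis using c by blast
  qed
  show "fst X = v \<Longrightarrow> X = relabel (rho v v') (ins (r, F) 0 v' v)"
  proof -
    assume h: "fst X = v"
    have "X \<noteq> ins (r, F) 0 v' v" using h f0 vv' by auto
    moreover have "r \<noteq> v \<Longrightarrow> X \<noteq> graft r R Y" for R Y using h f2[of R Y] by auto
    ultimately show ?thesis using c by blast
  qed
  show "fst X \<noteq> v' \<Longrightarrow> fst X \<noteq> v \<Longrightarrow> (\<exists>C0\<in>comps (V - {r}) (induced E (V - {r})). v \<in> C0 \<and> r \<noteq> v \<and>
       (\<exists>Y \<in> Pset (t C0) v v'. X = graft r (restF F r (t C0)) Y))"
  proof -
    assume h: "fst X \<noteq> v'" "fst X \<noteq> v"
    have "X \<noteq> ins (r, F) 0 v' v" using h f0 by auto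
    moreover have "X \<noteq> relabel (rho v v') (ins (r, F) 0 v' v)" using h f1 by auto
    ultimately show ?thesis using c by blast
  qed
qed

lemma split_aux:
  assumes "R1 \<union> M1 = R2 \<union> M2" "\<forall>e\<in>R1. e \<inter> A = {}" "\<forall>e\<in>R2. e \<inter> A = {}"
    "\<forall>e\<in>M1. e \<inter> A \<noteq> {}" "\<forall>e\<in>M2. e \<inter> A \<noteq> {}"
  shows "R1 = R2 \<and> M1 = M2"
proof -
  have "R1 = {e \<in> R1 \<union> M1. e \<inter> A = {}}" "M1 = {e \<in> R1 \<union> M1. e \<inter> A \<noteq> {}}" using assms(2,4) by blast+
  moreover have "R2 = {e \<in> R2 \<union> M2. e \<inter> A = {}}" "M2 = {e \<in> R2 \<union> M2. e \<inter> A \<noteq> {}}" using assms(3,5) by blast+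
  ultimately show ?thesis using assms(1) by metis
qed

lemma L3:
  "graph V E \<Longrightarrow> v \<in> V \<Longrightarrow> v' \<notin> V \<Longrightarrow> search_tree V E T1 \<Longrightarrow> search_tree V E T2 \<Longrightarrow>
   X \<in> Pset T1 v v' \<Longrightarrow> X \<in> Pset T2 v v' \<Longrightarrow> T1 = T2"
proof (induction "card V" arbitrary: V E v T1 T2 X rule: less_induct)
  case less
  note g = less.prems(1) and v = less.prems(2) and v' = less.prems(3)
  obtain r1 F1 where T1: "T1 = (r1, F1)" by (cases T1)
  obtain r2 F2 where T2: "T2 = (r2, F2)" by (cases T2)
  obtain t1 where dc1: "decomp V E r1 F1 t1" using less.prems(4) T1 st_iff by metis
  obtain t2 where dc2: "decomp V E r2 F2 t2" using less.prems(5) T2 st_iff by metis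
  have r1V: "r1 \<in> V" and r2V: "r2 \<in> V" using dc1 dc2 unfolding decomp_def by auto
  have vv': "v \<noteq> v'" using v v' by blast
  have gT1: "good V T1" using st_good[OF less.prems(4)] .
  have gT2: "good V T2" using st_good[OF less.prems(5)] .
  note c1 = Pset_cases_root[OF dc1 v v' less.prems(6)[unfolded T1]]
  note c2 = Pset_cases_root[OF dc2 v v' less.prems(7)[unfolded T2]]
  have f2: "fst (graft r R Y) = r" for r R Y by (simp add: graft_def)
  consider "fst X = v'" | "fst X = v" | "fst X \<noteq> v'" "fst X \<noteq> v" by blast
  then show ?case
  proof cases
    case 1
    have "ins (r1, F1) 0 v' v = ins (r2, F2) 0 v' v" using c1(1)[OF 1] c2(1)[OF 1] by simp
    thus ?thesis using ins0_inj[OF gT1 gT2 v'] T1 T2 by simp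
  next
    case 2
    have "relabel (rho v v') (ins (r1, F1) 0 v' v) = relabel (rho v v') (ins (r2, F2) 0 v' v)"
      using c1(2)[OF 2] c2(2)[OF 2] by simp
    hence "ins (r1, F1) 0 v' v = ins (r2, F2) 0 v' v" using relabel_transpose_twice by metis
    thus ?thesis using ins0_inj[OF gT1 gT2 v'] T1 T2 by simp
  next
    case 3
    obtain C1 Y1 where C1: "C1 \<in> comps (V - {r1}) (induced E (V - {r1}))" "v \<in> C1"
      and Y1: "Y1 \<in> Pset (t1 C1) v v'" "X = graft r1 (restF F1 r1 (t1 C1)) Y1"
      using c1(3)[OF 3] by blast
    obtain C2 Y2 where C2: "C2 \<in> comps (V - {r2}) (induced E (V - {r2}))" "v \<in> C2"
      and Y2: "Y2 \<in> Pset (t2 C2) v v'" "X = graft r2 (restF F2 r2 (t2 C2)) Y2"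
      using c2(3)[OF 3] by blast
    have rr: "r1 = r2" using Y1(2) Y2(2) f2 by metis
    define r where "r = r1"
    define C0 where "C0 = C1"
    have CC: "C2 = C0" using comps_disj[OF C1(1) C2(1)[folded rr] C1(2) C2(2)] by (simp add: C0_def)
    have C0: "C0 \<in> comps (V - {r}) (induced E (V - {r}))" "v \<in> C0" using C1 by (simp_all add: C0_def r_def)
    have dc1': "decomp V E r F1 t1" and dc2': "decomp V E r F2 t2" using dc1 dc2 rr by (simp_all add: r_def)
    have Y1': "Y1 \<in> Pset (t1 C0) v v'" "X = graft r (restF F1 r (t1 C0)) Y1" using Y1 by (simp_all add: C0_def r_def)
    have Y2': "Y2 \<in> Pset (t2 C0) v v'" "X = graft r (restF F2 r (t2 C0)) Y2" using Y2 CC rr by (simp_all add: r_def)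
    have C0V: "C0 \<subseteq> V - {r}" using decomp_good(3)[OF dc1' C0(1)] .
    have gC: "graph C0 (induced E C0)" using graph_induced[OF g] C0V by blast
    have v'C: "v' \<notin> C0" using C0V v' by blast
    have S1: "search_tree C0 (induced E C0) (t1 C0)" using decomp_good(5)[OF dc1' C0(1)] .
    have S2: "search_tree C0 (induced E C0) (t2 C0)" using decomp_good(5)[OF dc2' C0(1)] .
    have gY1: "good (insert v' C0) Y1" using st_good[OF L1[OF S1 gC C0(2) v'C Y1'(1)]] .
    have gY2: "good (insert v' C0) Y2" using st_good[OF L1[OF S2 gC C0(2) v'C Y2'(1)]] .
    let ?A = "insert v' C0"
    have rA: "r \<notin> ?A" using C0V r1V v' by (auto simp: r_def)
    have M: "\<forall>e\<in>insert {r, fst Y} (snd Y). e \<inter> ?A \<noteq> {}" if gY: "good ?A Y" for Y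
    proof
      fix e assume "e \<in> insert {r, fst Y} (snd Y)"
      thus "e \<inter> ?A \<noteq> {}"
      proof
        assume "e = {r, fst Y}" thus ?thesis using gY by (auto simp: good_def)
      next
        assume "e \<in> snd Y" thus ?thesis using good_edge_sub[OF gY] good_edge_ne[OF gY] by blast
      qed
    qed
    have Rd: "\<forall>e\<in>restF F r (t C0). e \<inter> ?A = {}" if "decomp V E r F t" for F t
      using restF_disj[OF that C0(1)] v' by blast
    have h1: "snd X = restF F1 r (t1 C0) \<union> insert {r, fst Y1} (snd Y1)"
      using Y1'(2) by (simp add: graft_def)
    have h2: "snd X = restF F2 r (t2 C0) \<union> insert {r, fst Y2} (snd Y2)"
      using Y2'(2) by (simp add: graft_def)
    have "restF F1 r (t1 C0) = restF F2 r (t2 C0) \<and> insert {r, fst Y1} (snd Y1) = insert {r, fst Y2} (snd Y2)"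
      using split_aux[OF trans[OF h1[symmetric] h2] Rd[OF dc1'] Rd[OF dc2'] M[OF gY1] M[OF gY2]] .
    note RM = this
    have RR: "restF F1 r (t1 C0) = restF F2 r (t2 C0)" using conjunct1[OF RM] .
    have MM: "insert {r, fst Y1} (snd Y1) = insert {r, fst Y2} (snd Y2)" using conjunct2[OF RM] .
    have "\<forall>e\<in>snd Y1. r \<notin> e" "\<forall>e\<in>snd Y2. r \<notin> e"
      using good_edge_sub[OF gY1] good_edge_sub[OF gY2] rA by blast+
    hence "fst Y1 = fst Y2 \<and> snd Y1 = snd Y2" using ins_edge_inj[OF MM] by simp
    hence YY: "Y1 = Y2" by (simp add: prod_eq_iff)
    have "C0 \<subset> V" using C0V r1V by (auto simp: r_def)
    moreover have "finite V" using g unfolding graph_def by blast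
    ultimately have "card C0 < card V" by (rule psubset_card_mono[rotated])
    hence SS: "t1 C0 = t2 C0" using less.hyps[OF _ gC C0(2) v'C S1 S2 Y1'(1)] Y2'(1) YY by blast
    have "F1 = F2" using restF_eq(2)[OF dc1' C0(1)] restF_eq(2)[OF dc2' C0(1)] RR SS by simp
    thus ?thesis using T1 T2 rr by simp
  qed
qed

theorem proposition2p7:
  fixes V :: "'a set" and E :: "'a set set" and v v' :: 'a
  assumes "graph V E" and "connected_graph V E" and "v \<in> V" and "v' \<notin> V"
  shows "partition_on {T. search_tree (insert v' V) (Gv_edges V E v v') T}
           ((\<lambda>T. Pset T v v') ` {T. search_tree V E T})"
  unfolding partition_on_def
proof (intro conjI)
  show "\<Union> ((\<lambda>T. Pset T v v') ` {T. search_tree V E T}) = {T. search_tree (insert v' V) (Gv_edges V E v v') T}"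
  proof
    show "\<Union> ((\<lambda>T. Pset T v v') ` {T. search_tree V E T}) \<subseteq> {T. search_tree (insert v' V) (Gv_edges V E v v') T}"
    proof
      fix X assume "X \<in> \<Union> ((\<lambda>T. Pset T v v') ` {T. search_tree V E T})"
      then obtain T where T: "search_tree V E T" "X \<in> Pset T v v'" by blast
      show "X \<in> {T. search_tree (insert v' V) (Gv_edges V E v v') T}"
        using L1[OF T(1) assms(1,3,4) T(2)] by simp
    qed
    show "{T. search_tree (insert v' V) (Gv_edges V E v v') T} \<subseteq> \<Union> ((\<lambda>T. Pset T v v') ` {T. search_tree V E T})"
    proof
      fix X assume "X \<in> {T. search_tree (insert v' V) (Gv_edges V E v v') T}"
      then obtain T where T: "search_tree V E T" "X \<in> Pset T v v'" using L2[OF assms] by blast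
      thus "X \<in> \<Union> ((\<lambda>T. Pset T v v') ` {T. search_tree V E T})" by blast
    qed
  qed
  show "disjoint ((\<lambda>T. Pset T v v') ` {T. search_tree V E T})"
    unfolding disjoint_def
  proof (intro ballI impI)
    fix a b assume ab: "a \<in> (\<lambda>T. Pset T v v') ` {T. search_tree V E T}" "b \<in> (\<lambda>T. Pset T v v') ` {T. search_tree V E T}" "a \<noteq> b"
    then obtain T1 T2 where T: "search_tree V E T1" "search_tree V E T2" "a = Pset T1 v v'" "b = Pset T2 v v'" by blast
    show "a \<inter> b = {}"
    proof (rule ccontr)
      assume "a \<inter> b \<noteq> {}"
      then obtain X where "X \<in> Pset T1 v v'" "X \<in> Pset T2 v v'" using T by blast
      hence "T1 = T2" using L3[OF assms(1,3,4) T(1,2)] by blast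
      thus False using T ab(3) by simp
    qed
  qed
  show "{} \<notin> (\<lambda>T. Pset T v v') ` {T. search_tree V E T}"
  proof
    assume "{} \<in> (\<lambda>T. Pset T v v') ` {T. search_tree V E T}"
    then obtain T where "Pset T v v' = {}" by blast
    thus False using ins0_in_Pset(1)[of T v' v] by simp
  qed
qed

end
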